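(* Let $\boldsymbol{A}$ be the adjacency matrix of an undirected graph without self-loops on a finite vertex set $\boldsymbol{V}=\{1,\dots,N\}$. Let $\mathcal{R}_e\subset\boldsymbol{V}$ be a nonempty set of egos, $n_e=|\mathcal{R}_e|$, and $\mathcal{R}_a\subset\boldsymbol{V}\setminus\mathcal{R}_e$ a nonempty set of alters, $n_a=|\mathcal{R}_a|$, where each alter $j\in\mathcal{R}_a$ has a unique recruiting ego $e(j)\in\mathcal{R}_e$ with $A_{j\,e(j)}=1$. Let $\widetilde{\boldsymbol{A}}$ be the observed adjacency matrix, with $\widetilde A_{ij}=\widetilde A_{ji}=1$ if and only if $i\in\mathcal{R}_a$ and $j=e(i)$ (and all other entries $0$). Let the treatment vector $\boldsymbol{Z}\in\{0,1\}^N$ have independent components with $\Pr(Z_i=1)=p_z\,\mathbb{I}\{i\in\mathcal{R}_e\}$ for a known $p_z\in(0,1)$. Define the true and observed exposures $F_i=\mathbb{I}\{\sum_{j\neq i}Z_jA_{ij}>0\}$ and $\widetilde F_i=\mathbb{I}\{\sum_{j\neq i}Z_j\widetilde A_{ij}>0\}$. Each unit $i\in\mathcal{R}_e\cup\mathcal{R}_a$ has fixed (non-random) real potential outcomes $Y_i(z,f)$, $z,f\in\{0,1\}$, and observed outcome $Y_i=\sum_{z,f\in\{0,1\}}Y_i(z,f)\mathbb{I}\{Z_i=z,F_i=f\}$. Define $$IE=\frac1{n_a}\sum_{i\in\mathcal{R}_a}[Y_i(0,1)-Y_i(0,0)],\qquad DE=\frac1{n_e}\sum_{i\in\mathcal{R}_e}[Y_i(1,0)-Y_i(0,0)],$$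 $$\widehat{IE}=\frac1{n_a}\sum_{i\in\mathcal{R}_a}\Big[\frac{\mathbb{I}\{\widetilde F_i=1\}Y_i}{p_z}-\frac{\mathbb{I}\{\widetilde F_i=0\}Y_i}{1-p_z}\Big],\qquad \widehat{DE}=\frac1{n_e}\sum_{i\in\mathcal{R}_e}\Big[\frac{\mathbb{I}\{Z_i=1\}Y_i}{p_z}-\frac{\mathbb{I}\{Z_i=0\}Y_i}{1-p_z}\Big].$$ For $i\in\mathcal{R}_a$ let $\pi_i^a=\Pr(F_i=1)$ and for $i\in\mathcal{R}_e$ let $\pi_i^e=\Pr(F_i=1)$, probabilities taken over $\boldsymbol{Z}$. Then, with expectations over $\boldsymbol{Z}$, $$\mathbb{E}_{\boldsymbol{Z}}[\widehat{IE}]=IE+\frac1{n_a}\sum_{i\in\mathcal{R}_a}\frac{p_z-\pi_i^a}{1-p_z}\,[Y_i(0,1)-Y_i(0,0)],$$ $$\mathbb{E}_{\boldsymbol{Z}}[\widehat{DE}]=DE+\frac1{n_e}\sum_{i\in\mathcal{R}_e}\pi_i^e\Big\{[Y_i(1,1)-Y_i(0,1)]-[Y_i(1,0)-Y_i(0,0)]\Big\}.$$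
   Context: Design-based setting: the network $\boldsymbol{A}$, the sampled sets $\mathcal{R}_e,\mathcal{R}_a$, the recruitment map $e(\cdot)$ and the potential outcomes are all fixed; the only randomness is the treatment assignment $\boldsymbol{Z}$ (all probabilities and expectations are over $\boldsymbol{Z}$, conditional on the sample). The observed network consists of disjoint ego-networks (each ego with the alters it recruited), while the true network $\boldsymbol{A}$ may contain additional ego–ego and alter–ego edges. *)

theory Defs
  imports "HOL-Probability.Probability"
begin

text \<open>Vertices are V = {1..N}; matrices are real-valued functions nat => nat => real.
  A treatment assignment is a function z :: nat => bool (z i means Z_i = 1),
  equal to False outside V.\<close>

definition vertices :: "nat \<Rightarrow> nat set" where
  "vertices N = {1..N}"

definition simple_adj :: "nat \<Rightarrow> (nat \<Rightarrow> nat \<Rightarrow> real) \<Rightarrow> bool" where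
  "simple_adj N A \<longleftrightarrow> (\<forall>i\<in>vertices N. \<forall>j\<in>vertices N.
      A i j \<in> {0, 1} \<and> A i j = A j i) \<and> (\<forall>i\<in>vertices N. A i i = 0)"

definition obs_adj :: "nat set \<Rightarrow> (nat \<Rightarrow> nat) \<Rightarrow> nat \<Rightarrow> nat \<Rightarrow> real" where
  "obs_adj Ralt e i j = (if (i \<in> Ralt \<and> j = e i) \<or> (j \<in> Ralt \<and> i = e j) then 1 else 0)"

definition Zdist :: "nat \<Rightarrow> nat set \<Rightarrow> real \<Rightarrow> (nat \<Rightarrow> bool) pmf" where
  "Zdist N Rego p = Pi_pmf (vertices N) False (\<lambda>i. bernoulli_pmf (if i \<in> Rego then p else 0))"

definition exposure :: "nat \<Rightarrow> (nat \<Rightarrow> nat \<Rightarrow> real) \<Rightarrow> (nat \<Rightarrow> bool) \<Rightarrow> nat \<Rightarrow> nat" where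
  "exposure N A z i =
     (if (\<Sum>j\<in>vertices N - {i}. of_bool (z j) * A i j) > 0 then 1 else 0)"

definition obs_outcome ::
  "nat \<Rightarrow> (nat \<Rightarrow> nat \<Rightarrow> real) \<Rightarrow> (nat \<Rightarrow> nat \<Rightarrow> nat \<Rightarrow> real) \<Rightarrow> (nat \<Rightarrow> bool) \<Rightarrow> nat \<Rightarrow> real" where
  "obs_outcome N A Y z i =
     (\<Sum>zz\<in>{0,1::nat}. \<Sum>ff\<in>{0,1::nat}.
        Y i zz ff * of_bool (of_bool (z i) = zz \<and> exposure N A z i = ff))"

definition IE :: "nat set \<Rightarrow> (nat \<Rightarrow> nat \<Rightarrow> nat \<Rightarrow> real) \<Rightarrow> real" where
  "IE Ralt Y = (1 / real (card Ralt)) * (\<Sum>i\<in>Ralt. Y i 0 1 - Y i 0 0)"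

definition DE :: "nat set \<Rightarrow> (nat \<Rightarrow> nat \<Rightarrow> nat \<Rightarrow> real) \<Rightarrow> real" where
  "DE Rego Y = (1 / real (card Rego)) * (\<Sum>i\<in>Rego. Y i 1 0 - Y i 0 0)"

definition IE_hat ::
  "nat \<Rightarrow> (nat \<Rightarrow> nat \<Rightarrow> real) \<Rightarrow> nat set \<Rightarrow> (nat \<Rightarrow> nat) \<Rightarrow> real
   \<Rightarrow> (nat \<Rightarrow> nat \<Rightarrow> nat \<Rightarrow> real) \<Rightarrow> (nat \<Rightarrow> bool) \<Rightarrow> real" where
  "IE_hat N A Ralt e p Y z = (1 / real (card Ralt)) *
     (\<Sum>i\<in>Ralt. of_bool (exposure N (obs_adj Ralt e) z i = 1) * obs_outcome N A Y z i / p
             - of_bool (exposure N (obs_adj Ralt e) z i = 0) * obs_outcome N A Y z i / (1 - p))"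

definition DE_hat ::
  "nat \<Rightarrow> (nat \<Rightarrow> nat \<Rightarrow> real) \<Rightarrow> nat set \<Rightarrow> real
   \<Rightarrow> (nat \<Rightarrow> nat \<Rightarrow> nat \<Rightarrow> real) \<Rightarrow> (nat \<Rightarrow> bool) \<Rightarrow> real" where
  "DE_hat N A Rego p Y z = (1 / real (card Rego)) *
     (\<Sum>i\<in>Rego. of_bool (z i) * obs_outcome N A Y z i / p
             - of_bool (\<not> z i) * obs_outcome N A Y z i / (1 - p))"

end

theory Submission
  imports Defs
begin

lemma pair_prod_measure:
  "measure_pmf.prob (pair_pmf M N) (A \<times> B) = measure_pmf.prob M A * measure_pmf.prob N B"
proof -
  have "measure_pmf.prob (pair_pmf M N) (A \<times> B) = measure_pmf.prob (pair_pmf M N) ((A \<times> B) \<inter> set_pmf (pair_pmf M N))"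
    by (rule measure_Int_set_pmf[symmetric])
  also have "(A \<times> B) \<inter> set_pmf (pair_pmf M N) = (A \<inter> set_pmf M) \<times> (B \<inter> set_pmf N)" by auto
  also have "measure_pmf.prob (pair_pmf M N) \<dots> = measure_pmf.prob M (A \<inter> set_pmf M) * measure_pmf.prob N (B \<inter> set_pmf N)"
    by (rule measure_pmf_prob_product) auto
  finally show ?thesis by (simp add: measure_Int_set_pmf)
qed

definition bq :: "nat set \<Rightarrow> real \<Rightarrow> nat \<Rightarrow> bool pmf" where
  "bq R p i = bernoulli_pmf (if i \<in> R then p else 0)"

lemma Zdist_split:
  assumes "i \<in> vertices N"
  shows "Zdist N R p = map_pmf (\<lambda>(y,f). f(i:=y)) (pair_pmf (bq R p i) (Pi_pmf (vertices N - {i}) False (bq R p)))"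
proof -
  have "vertices N = insert i (vertices N - {i})" using assms by auto
  then have "Zdist N R p = Pi_pmf (insert i (vertices N - {i})) False (bq R p)"
    unfolding Zdist_def bq_def by (metis)
  also have "\<dots> = map_pmf (\<lambda>(y,f). f(i:=y)) (pair_pmf (bq R p i) (Pi_pmf (vertices N - {i}) False (bq R p)))"
    by (rule Pi_pmf_insert) (auto simp: vertices_def)
  finally show ?thesis .
qed

lemma indep:
  assumes "i \<in> vertices N" "\<And>f y. Q (f(i:=y)) = Q f"
  shows "measure_pmf.prob (Zdist N R p) {z. P (z i) \<and> Q z}
       = measure_pmf.prob (bq R p i) {y. P y} * measure_pmf.prob (Zdist N R p) {z. Q z}"
proof -
  let ?C = "Pi_pmf (vertices N - {i}) False (bq R p)"
  have 1: "(\<lambda>(y,f). f(i:=y)) -` {z. P (z i) \<and> Q z} = {y. P y} \<times> {f. Q f}"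
    using assms(2) by auto
  have 2: "(\<lambda>(y,f). f(i:=y)) -` {z. Q z} = UNIV \<times> {f. Q f}"
    using assms(2) by auto
  have "measure_pmf.prob (Zdist N R p) {z. P (z i) \<and> Q z} = measure_pmf.prob (bq R p i) {y. P y} * measure_pmf.prob ?C {f. Q f}"
    by (simp only: Zdist_split[OF assms(1)] measure_map_pmf 1 pair_prod_measure)
  moreover have "measure_pmf.prob (Zdist N R p) {z. Q z} = measure_pmf.prob ?C {f. Q f}"
    by (simp only: Zdist_split[OF assms(1)] measure_map_pmf 2 pair_prod_measure) simp
  ultimately show ?thesis by simp
qed

lemma prob_single:
  assumes "i \<in> vertices N"
  shows "measure_pmf.prob (Zdist N R p) {z. P (z i)} = measure_pmf.prob (bq R p i) {y. P y}"
  using indep[OF assms, of "\<lambda>_. True" R p P] by simp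

lemma bq_True: "0 \<le> p \<Longrightarrow> p \<le> 1 \<Longrightarrow> measure_pmf.prob (bq R p i) {y. y} = (if i \<in> R then p else 0)"
proof -
  assume "0 \<le> p" "p \<le> 1"
  have "{y. y} = {True}" by auto
  then show ?thesis using \<open>0 \<le> p\<close> \<open>p \<le> 1\<close> by (simp add: measure_pmf_single bq_def)
qed

lemma bq_False: "0 \<le> p \<Longrightarrow> p \<le> 1 \<Longrightarrow> measure_pmf.prob (bq R p i) {y. \<not> y} = 1 - (if i \<in> R then p else 0)"
proof -
  assume "0 \<le> p" "p \<le> 1"
  have "{y. \<not> y} = {False}" by auto
  then show ?thesis using \<open>0 \<le> p\<close> \<open>p \<le> 1\<close> by (simp add: measure_pmf_single bq_def)
qed

lemma set_Zdist_nonR: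
  assumes "i \<in> vertices N" "i \<notin> R" "z \<in> set_pmf (Zdist N R p)"
  shows "\<not> z i"
proof -
  have "True \<notin> set_pmf (bq R p i)" using assms(2) by (simp add: bq_def set_pmf_iff)
  then show ?thesis using assms(3) unfolding Zdist_split[OF assms(1)] by auto
qed

lemma finite_Zdist: "finite (set_pmf (Zdist N R p))"
proof -
  have "set_pmf (Zdist N R p) \<subseteq> {f. \<forall>x. x \<notin> vertices N \<longrightarrow> f x = False}"
    unfolding Zdist_def by (rule set_Pi_pmf_subset) (simp add: vertices_def)
  also have "\<dots> \<subseteq> (\<lambda>S x. x \<in> S) ` Pow (vertices N)"
  proof
    fix f assume "f \<in> {f. \<forall>x. x \<notin> vertices N \<longrightarrow> f x = False}"
    then have "f = (\<lambda>x. x \<in> {x \<in> vertices N. f x})" by auto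
    then show "f \<in> (\<lambda>S x. x \<in> S) ` Pow (vertices N)" by blast
  qed
  finally show ?thesis by (rule finite_subset) (simp add: vertices_def)
qed

lemma exp4:
  fixes h :: "'a \<Rightarrow> bool \<times> nat" and g :: "bool \<times> nat \<Rightarrow> real"
  assumes "\<And>z. snd (h z) \<in> {0,1}"
  shows "measure_pmf.expectation M (\<lambda>z. g (h z)) =
    (\<Sum>b\<in>{True,False}. \<Sum>f\<in>{0,1}. g (b,f) * measure_pmf.prob M {z. h z = (b,f)})"
proof -
  have "measure_pmf.expectation M (\<lambda>z. g (h z)) = measure_pmf.expectation (map_pmf h M) g" by simp
  also have "\<dots> = (\<Sum>v\<in>{True,False} \<times> {0,1}. g v * pmf (map_pmf h M) v)"
  proof (rule integral_measure_pmf_real)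
    fix a assume "a \<in> set_pmf (map_pmf h M)"
    then obtain x where "a = h x" by auto
    then have "snd a \<in> {0,1}" using assms by simp
    then show "a \<in> {True,False} \<times> {0,1}" by (cases a) auto
  qed simp
  also have "\<dots> = (\<Sum>b\<in>{True,False}. \<Sum>f\<in>{0,1}. g (b,f) * pmf (map_pmf h M) (b,f))"
    by (subst sum.cartesian_product) simp
  also have "\<dots> = (\<Sum>b\<in>{True,False}. \<Sum>f\<in>{0,1}. g (b,f) * measure_pmf.prob M {z. h z = (b,f)})"
    by (simp add: pmf_map vimage_def)
  finally show ?thesis .
qed

lemma exposure_01: "exposure N A z i \<in> {0,1}" by (simp add: exposure_def)

lemma exposure_upd: "exposure N A (f(i:=y)) i = exposure N A f i"
  unfolding exposure_def by (rule arg_cong[where f="\<lambda>s. if s > 0 then 1 else 0"], rule sum.cong) auto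

lemma obs_outcome_eq: "obs_outcome N A Y z i = Y i (if z i then 1 else 0) (exposure N A z i)"
  using exposure_01[of N A z i] by (auto simp: obs_outcome_def)

lemma bq_eq: "0 \<le> p \<Longrightarrow> p \<le> 1 \<Longrightarrow> i \<in> R \<Longrightarrow> measure_pmf.prob (bq R p i) {y. y = b} = (if b then p else 1 - p)"
  using bq_True[of p R i] bq_False[of p R i] by (cases b) auto

lemma prob_F0: "measure_pmf.prob M {z. exposure N A z i = 0} = 1 - measure_pmf.prob M {z. exposure N A z i = 1}"
proof -
  have "{z. exposure N A z i = 0} = space (measure_pmf M) - {z. exposure N A z i = 1}"
    using exposure_01[of N A _ i] by auto
  then show ?thesis by (simp only:) (rule measure_pmf.prob_compl, simp)
qed

lemma ego_term:
  assumes i: "i \<in> vertices N" "i \<in> R" and p: "0 < p" "p < 1"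
  shows "measure_pmf.expectation (Zdist N R p)
     (\<lambda>z. of_bool (z i) * obs_outcome N A Y z i / p - of_bool (\<not> z i) * obs_outcome N A Y z i / (1 - p))
   = (Y i 1 0 - Y i 0 0) + measure_pmf.prob (Zdist N R p) {z. exposure N A z i = 1}
        * ((Y i 1 1 - Y i 0 1) - (Y i 1 0 - Y i 0 0))"
proof -
  define g where "g = (\<lambda>(b::bool,f::nat). of_bool b * Y i (if b then 1 else 0) f / p
                       - of_bool (\<not> b) * Y i (if b then 1 else 0) f / (1 - p))"
  define h where "h = (\<lambda>z::nat\<Rightarrow>bool. (z i, exposure N A z i))"
  let ?M = "Zdist N R p"
  let ?\<pi> = "measure_pmf.prob ?M {z. exposure N A z i = 1}"
  have fe: "(\<lambda>z. of_bool (z i) * obs_outcome N A Y z i / p - of_bool (\<not> z i) * obs_outcome N A Y z i / (1 - p))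
        = (\<lambda>z. g (h z))"
    by (auto simp: g_def h_def obs_outcome_eq)
  have m: "measure_pmf.prob ?M {z. h z = (b,f)} = (if b then p else 1 - p) * measure_pmf.prob ?M {z. exposure N A z i = f}" for b f
  proof -
    have "{z. h z = (b,f)} = {z. (\<lambda>y. y = b) (z i) \<and> (\<lambda>z. exposure N A z i = f) z}" by (auto simp: h_def)
    then show ?thesis
      using indep[OF i(1), where Q="\<lambda>z. exposure N A z i = f" and P="\<lambda>y. y = b" and R=R and p=p] bq_eq[of p i R b] p i
      by (simp add: exposure_upd)
  qed
  have gT: "g (True, f) * measure_pmf.prob ?M {z. h z = (True, f)} = Y i 1 f * measure_pmf.prob ?M {z. exposure N A z i = f}" for f
    using p by (simp add: g_def m)
  have gF: "g (False, f) * measure_pmf.prob ?M {z. h z = (False, f)} = - Y i 0 f * measure_pmf.prob ?M {z. exposure N A z i = f}" for f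
    using p by (simp add: g_def m)
  show ?thesis
    unfolding fe
    apply (subst exp4)
     apply (simp only: h_def snd_conv exposure_01)
    apply (simp only: sum.insert_remove finite.intros sum.empty insert_iff empty_iff singleton_iff simp_thms gT gF)
    apply (simp add: gT gF prob_F0 algebra_simps)
    done
qed

lemma alg: fixes p a b q :: real
  assumes "0 < p" "p < 1"
  shows "0 * 0 + (a / p) * p + (- b / (1 - p)) * (1 - q) + (- a / (1-p)) * (q - p) = (a - b) + (p - q) / (1 - p) * (a - b)"
proof -
  define d where "d = 1 - p"
  have d: "d \<noteq> 0" "p \<noteq> 0" using assms by (auto simp: d_def)
  have p: "1 - p = d" "q - p = q - 1 + d" "p - q = 1 - d - q" by (auto simp: d_def)
  show ?thesis unfolding p using d by (simp add: field_simps)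
qed

lemma alter_term:
  assumes adj: "simple_adj N A" and i: "i \<in> Ralt" and Ralt: "Ralt \<subseteq> vertices N - R"
    and rec: "\<forall>j\<in>Ralt. e j \<in> R \<and> A j (e j) = 1" and R: "R \<subseteq> vertices N"
    and p: "0 < p" "p < 1"
  shows "measure_pmf.expectation (Zdist N R p)
     (\<lambda>z. of_bool (exposure N (obs_adj Ralt e) z i = 1) * obs_outcome N A Y z i / p
             - of_bool (exposure N (obs_adj Ralt e) z i = 0) * obs_outcome N A Y z i / (1 - p))
   = (Y i 0 1 - Y i 0 0) + (p - measure_pmf.prob (Zdist N R p) {z. exposure N A z i = 1}) / (1 - p)
        * (Y i 0 1 - Y i 0 0)"
proof -
  let ?M = "Zdist N R p"
  let ?\<pi> = "measure_pmf.prob ?M {z. exposure N A z i = 1}"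
  have iV: "i \<in> vertices N" "i \<notin> R" using i Ralt by auto
  have eR: "e i \<in> R" "A i (e i) = 1" using rec i by auto
  have eV: "e i \<in> vertices N - {i}" using eR R iV by auto
  have obs: "exposure N (obs_adj Ralt e) z i = (if z (e i) then 1 else 0)" for z
  proof -
    have "(\<Sum>j\<in>vertices N - {i}. of_bool (z j) * obs_adj Ralt e i j)
        = (\<Sum>j\<in>vertices N - {i}. if j = e i then of_bool (z (e i)) else 0)"
    proof (rule sum.cong)
      fix j assume "j \<in> vertices N - {i}"
      have "\<not> (j \<in> Ralt \<and> i = e j)" using rec iV by auto
      then show "of_bool (z j) * obs_adj Ralt e i j = (if j = e i then of_bool (z (e i)) else 0)"
        using i by (auto simp: obs_adj_def)
    qed simp
    also have "\<dots> = of_bool (z (e i))" using eV by (simp add: vertices_def)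
    finally show ?thesis by (simp add: exposure_def)
  qed
  have tru: "exposure N A z i = 1" if "z (e i)" for z
  proof -
    have nn: "\<forall>j\<in>vertices N - {i} - {e i}. 0 \<le> of_bool (z j) * A i j"
      using adj iV unfolding simple_adj_def by fastforce
    have "of_bool (z (e i)) * A i (e i) \<le> (\<Sum>j\<in>vertices N - {i}. of_bool (z j) * A i j)"
      by (rule member_le_sum[OF eV]) (use nn in auto, simp add: vertices_def)
    then show ?thesis using that eR by (simp add: exposure_def)
  qed
  define g where "g = (\<lambda>(b::bool,f::nat). of_bool b * Y i 0 f / p - of_bool (\<not> b) * Y i 0 f / (1 - p))"
  define h where "h = (\<lambda>z::nat\<Rightarrow>bool. (z (e i), exposure N A z i))"
  have ae: "AE z in ?M. of_bool (exposure N (obs_adj Ralt e) z i = 1) * obs_outcome N A Y z i / p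
             - of_bool (exposure N (obs_adj Ralt e) z i = 0) * obs_outcome N A Y z i / (1 - p) = g (h z)"
  proof (rule AE_pmfI)
    fix z assume "z \<in> set_pmf ?M"
    then have "\<not> z i" using set_Zdist_nonR iV by blast
    then show "of_bool (exposure N (obs_adj Ralt e) z i = 1) * obs_outcome N A Y z i / p
             - of_bool (exposure N (obs_adj Ralt e) z i = 0) * obs_outcome N A Y z i / (1 - p) = g (h z)"
      by (simp add: obs obs_outcome_eq g_def h_def)
  qed
  have pe: "measure_pmf.prob ?M {z. z (e i)} = p"
    using prob_single[of "e i" N R p "\<lambda>y. y = True"] bq_eq[of p "e i" R True] eV eR p by simp
  have m1: "measure_pmf.prob ?M {z. h z = (True, 1)} = p"
  proof -
    have "{z. h z = (True, 1)} = {z. z (e i)}" using tru by (auto simp: h_def)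
    then show ?thesis using pe by simp
  qed
  have m0: "measure_pmf.prob ?M {z. h z = (True, 0)} = 0"
  proof -
    have "{z. h z = (True, 0)} = {}" using tru by (auto simp: h_def)
    then show ?thesis by simp
  qed
  have m3: "measure_pmf.prob ?M {z. h z = (False, 1)} = ?\<pi> - p"
  proof -
    have "{z. h z = (False, 1)} = {z. exposure N A z i = 1} - {z. z (e i)}" using tru by (auto simp: h_def)
    moreover have "measure_pmf.prob ?M ({z. exposure N A z i = 1} - {z. z (e i)}) = ?\<pi> - measure_pmf.prob ?M {z. z (e i)}"
      by (rule measure_pmf.finite_measure_Diff) (use tru in auto)
    ultimately show ?thesis using pe by simp
  qed
  have m2: "measure_pmf.prob ?M {z. h z = (False, 0)} = 1 - ?\<pi>"
  proof -
    have "{z. h z = (False, 0)} = {z. exposure N A z i = 0}"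
    proof (rule set_eqI)
      fix z show "z \<in> {z. h z = (False, 0)} \<longleftrightarrow> z \<in> {z. exposure N A z i = 0}"
        using tru[of z] by (cases "z (e i)") (simp_all add: h_def)
    qed
    then show ?thesis using prob_F0[of ?M N A i] by simp
  qed
  have "measure_pmf.expectation ?M
     (\<lambda>z. of_bool (exposure N (obs_adj Ralt e) z i = 1) * obs_outcome N A Y z i / p
             - of_bool (exposure N (obs_adj Ralt e) z i = 0) * obs_outcome N A Y z i / (1 - p))
     = measure_pmf.expectation ?M (\<lambda>z. g (h z))"
    by (rule integral_cong_AE) (use ae in auto)
  also have "\<dots> = (\<Sum>b\<in>{True,False}. \<Sum>f\<in>{0,1}. g (b,f) * measure_pmf.prob ?M {z. h z = (b,f)})"
    by (rule exp4) (simp only: h_def snd_conv exposure_01)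
  also have "\<dots> = g (True,0) * 0 + g (True, 1) * p + g (False, 0) * (1 - ?\<pi>) + g (False, 1) * (?\<pi> - p)"
    using m0 m1 m2 m3 by (simp add: numeral_eq_Suc One_nat_def)
  also have "\<dots> = (Y i 0 1 - Y i 0 0) + (p - ?\<pi>) / (1 - p) * (Y i 0 1 - Y i 0 0)"
  proof -
    have "g (True,1) = Y i 0 1 / p" "g (False,0) = - Y i 0 0/(1-p)" "g (False,1) = - Y i 0 1/(1-p)"
      by (simp_all add: g_def)
    then show ?thesis using alg[OF p, of "Y i 0 1" "Y i 0 0" ?\<pi>] by simp
  qed
  finally show ?thesis .
qed

theorem proposition1:
  fixes N :: nat and A :: "nat \<Rightarrow> nat \<Rightarrow> real" and Rego Ralt :: "nat set"
    and e :: "nat \<Rightarrow> nat" and p :: real and Y :: "nat \<Rightarrow> nat \<Rightarrow> nat \<Rightarrow> real"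
  assumes adj: "simple_adj N A"
    and Rego: "Rego \<subseteq> vertices N" "Rego \<noteq> {}"
    and Ralt: "Ralt \<subseteq> vertices N - Rego" "Ralt \<noteq> {}"
    and rec: "\<forall>j\<in>Ralt. e j \<in> Rego \<and> A j (e j) = 1"
    and p: "0 < p" "p < 1"
  shows "measure_pmf.expectation (Zdist N Rego p) (IE_hat N A Ralt e p Y)
           = IE Ralt Y + (1 / real (card Ralt)) *
               (\<Sum>i\<in>Ralt. (p - measure_pmf.prob (Zdist N Rego p) {z. exposure N A z i = 1}) / (1 - p)
                         * (Y i 0 1 - Y i 0 0))
       \<and> measure_pmf.expectation (Zdist N Rego p) (DE_hat N A Rego p Y)
           = DE Rego Y + (1 / real (card Rego)) *
               (\<Sum>i\<in>Rego. measure_pmf.prob (Zdist N Rego p) {z. exposure N A z i = 1}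
                         * ((Y i 1 1 - Y i 0 1) - (Y i 1 0 - Y i 0 0)))"
proof
  let ?M = "Zdist N Rego p"
  have int: "integrable (measure_pmf ?M) f" for f :: "(nat \<Rightarrow> bool) \<Rightarrow> real"
    by (rule integrable_measure_pmf_finite[OF finite_Zdist])
  have e1: "IE_hat N A Ralt e p Y = (\<lambda>z. (1 / real (card Ralt)) *
     (\<Sum>i\<in>Ralt. of_bool (exposure N (obs_adj Ralt e) z i = 1) * obs_outcome N A Y z i / p
             - of_bool (exposure N (obs_adj Ralt e) z i = 0) * obs_outcome N A Y z i / (1 - p)))"
    by (rule ext) (simp add: IE_hat_def)
  have "measure_pmf.expectation ?M (IE_hat N A Ralt e p Y) = (1 / real (card Ralt)) *
     (\<Sum>i\<in>Ralt. measure_pmf.expectation ?M (\<lambda>z. of_bool (exposure N (obs_adj Ralt e) z i = 1) * obs_outcome N A Y z i / p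
             - of_bool (exposure N (obs_adj Ralt e) z i = 0) * obs_outcome N A Y z i / (1 - p)))"
    unfolding e1 by (simp add: Bochner_Integration.integral_sum int)
  also have "\<dots> = (1 / real (card Ralt)) * (\<Sum>i\<in>Ralt. (Y i 0 1 - Y i 0 0) + (p - measure_pmf.prob ?M {z. exposure N A z i = 1}) / (1 - p)
        * (Y i 0 1 - Y i 0 0))"
    by (rule arg_cong[where f="\<lambda>x. _ * x"], rule sum.cong[OF refl], rule alter_term[OF adj _ Ralt(1) rec Rego(1) p])
  finally show "measure_pmf.expectation ?M (IE_hat N A Ralt e p Y)
           = IE Ralt Y + (1 / real (card Ralt)) *
               (\<Sum>i\<in>Ralt. (p - measure_pmf.prob ?M {z. exposure N A z i = 1}) / (1 - p)
                         * (Y i 0 1 - Y i 0 0))"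
    by (simp add: IE_def sum.distrib distrib_left)
next
  let ?M = "Zdist N Rego p"
  have int: "integrable (measure_pmf ?M) f" for f :: "(nat \<Rightarrow> bool) \<Rightarrow> real"
    by (rule integrable_measure_pmf_finite[OF finite_Zdist])
  have e1: "DE_hat N A Rego p Y = (\<lambda>z. (1 / real (card Rego)) *
     (\<Sum>i\<in>Rego. of_bool (z i) * obs_outcome N A Y z i / p
             - of_bool (\<not> z i) * obs_outcome N A Y z i / (1 - p)))"
    by (rule ext) (simp add: DE_hat_def)
  have "measure_pmf.expectation ?M (DE_hat N A Rego p Y) = (1 / real (card Rego)) *
     (\<Sum>i\<in>Rego. measure_pmf.expectation ?M (\<lambda>z. of_bool (z i) * obs_outcome N A Y z i / p
             - of_bool (\<not> z i) * obs_outcome N A Y z i / (1 - p)))"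
    unfolding e1 by (simp add: Bochner_Integration.integral_sum int)
  also have "\<dots> = (1 / real (card Rego)) * (\<Sum>i\<in>Rego. (Y i 1 0 - Y i 0 0) + measure_pmf.prob ?M {z. exposure N A z i = 1}
        * ((Y i 1 1 - Y i 0 1) - (Y i 1 0 - Y i 0 0)))"
    by (rule arg_cong[where f="\<lambda>x. _ * x"], rule sum.cong[OF refl], rule ego_term) (use Rego(1) p in auto)
  finally show "measure_pmf.expectation ?M (DE_hat N A Rego p Y)
           = DE Rego Y + (1 / real (card Rego)) *
               (\<Sum>i\<in>Rego. measure_pmf.prob ?M {z. exposure N A z i = 1}
                         * ((Y i 1 1 - Y i 0 1) - (Y i 1 0 - Y i 0 0)))"
    by (simp add: DE_def sum.distrib distrib_left)
qed

end
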